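(* Let $A$ be a unital $C^*$-algebra and $a\in A$. Then $a$ is self-adjoint if and only if $\rho(a^*,a)=0$ and $\sup_{n\in\mathbb Z}\|e^{ina}\|<+\infty$.
   Context: For $a,b\in A$ and $n\geq 0$ put $C_{a,b}^n\mathbf 1=\sum_{k=0}^n(-1)^k\binom{n}{k}a^{n-k}b^k$ (with $a^0=b^0=\mathbf 1$), and $\rho(a,b)=\limsup_{n\to\infty}\|C_{a,b}^n\mathbf 1\|^{1/n}$. *)

theory Defs
  imports Complex_Main "HOL-Library.Extended_Real" "HOL-Library.Liminf_Limsup"
begin

text \<open>Complex scalar multiplication is cscale, compatible with the
  real scaling scaleR inherited from the real normed algebra structure.\<close>

class cstar_algebra_1 = real_normed_algebra_1 + banach +
  fixes cscale :: "complex \<Rightarrow> 'a \<Rightarrow> 'a"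
    and adj :: "'a \<Rightarrow> 'a"
  assumes cscale_add_right: "cscale c (x + y) = cscale c x + cscale c y"
    and cscale_add_left: "cscale (c + d) x = cscale c x + cscale d x"
    and cscale_cscale: "cscale c (cscale d x) = cscale (c * d) x"
    and cscale_one: "cscale 1 x = x"
    and cscale_of_real: "cscale (complex_of_real r) x = scaleR r x"
    and cscale_mult_left: "cscale c x * y = cscale c (x * y)"
    and cscale_mult_right: "x * cscale c y = cscale c (x * y)"
    and norm_cscale: "norm (cscale c x) = cmod c * norm x"
    and adj_adj: "adj (adj x) = x"
    and adj_add: "adj (x + y) = adj x + adj y"
    and adj_cscale: "adj (cscale c x) = cscale (cnj c) (adj x)"
    and adj_mult: "adj (x * y) = adj y * adj x"
    and cstar_identity: "norm (adj x * x) = (norm x)\<^sup>2"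

definition Cpow_one :: "'a::cstar_algebra_1 \<Rightarrow> 'a \<Rightarrow> nat \<Rightarrow> 'a" where
  "Cpow_one a b n = (\<Sum>k\<le>n. ((-1) ^ k * of_nat (n choose k)) *\<^sub>R (a ^ (n - k) * b ^ k))"

definition rho :: "'a::cstar_algebra_1 \<Rightarrow> 'a \<Rightarrow> ereal" where
  "rho a b = limsup (\<lambda>n. ereal (root n (norm (Cpow_one a b n))))"

end

theory Submission
  imports Defs "HOL-Complex_Analysis.Complex_Analysis" "HOL-Real_Asymp.Real_Asymp"
begin

definition hb_good :: "'a::real_normed_vector \<Rightarrow> ('a \<times> real) set \<Rightarrow> bool" where
  "hb_good d G \<longleftrightarrow> (\<forall>x a b. (x,a)\<in>G \<longrightarrow> (x,b)\<in>G \<longrightarrow> a = b) \<and>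
     (\<forall>x a y b. (x,a)\<in>G \<longrightarrow> (y,b)\<in>G \<longrightarrow> (x+y, a+b)\<in>G) \<and>
     (\<forall>x a r. (x,a)\<in>G \<longrightarrow> (r *\<^sub>R x, r*a)\<in>G) \<and>
     (\<forall>x a. (x,a)\<in>G \<longrightarrow> a \<le> norm x) \<and> (d, norm d) \<in> G"

lemma hb_extend:
  fixes d :: "'a::real_normed_vector"
  assumes M: "hb_good d M" and w: "\<forall>a. (w,a) \<notin> M"
  shows "\<exists>M'. hb_good d M' \<and> M \<subseteq> M' \<and> M' \<noteq> M"
proof -
  have fn1: "\<And>x a b. (x,a)\<in>M \<Longrightarrow> (x,b)\<in>M \<Longrightarrow> a = b"
    and ad1: "\<And>x a y b. (x,a)\<in>M \<Longrightarrow> (y,b)\<in>M \<Longrightarrow> (x+y, a+b)\<in>M"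
    and sc: "\<And>x a r. (x,a)\<in>M \<Longrightarrow> (r *\<^sub>R x, r*a)\<in>M"
    and bd: "\<And>x a. (x,a)\<in>M \<Longrightarrow> a \<le> norm x"
    and dM: "(d, norm d) \<in> M"
    using M unfolding hb_good_def by blast+
  have zero: "(0, 0) \<in> M" using sc[OF dM, of 0] by simp
  define S where "S = {a - norm (x - w) | x a. (x,a)\<in>M}"
  define c where "c = Sup S"
  have Sne: "S \<noteq> {}" using zero by (auto simp: S_def)
  have Sub: "s \<le> norm (y + w) - b" if sS: "s \<in> S" and yb: "(y,b)\<in>M" for s y b
  proof -
    obtain x a where s: "s = a - norm (x - w)" and xa: "(x,a)\<in>M" using sS unfolding S_def by blast
    have "a + b \<le> norm (x + y)" using bd[OF ad1[OF xa yb]] .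
    also have "x + y = (x - w) + (y + w)" by simp
    also have "norm \<dots> \<le> norm (x - w) + norm (y + w)" by (rule norm_triangle_ineq)
    finally show ?thesis using s by simp
  qed
  have bdd: "bdd_above S" using Sub zero unfolding bdd_above_def by blast
  have c_le: "c \<le> norm (y + w) - b" if "(y,b)\<in>M" for y b
    unfolding c_def using Sne Sub that by (intro cSup_least) auto
  have c_ge: "a - norm (x - w) \<le> c" if "(x,a)\<in>M" for x a
    unfolding c_def using bdd that by (intro cSup_upper) (auto simp: S_def)
  define M' where "M' = {(x + t *\<^sub>R w, a + t * c) | x a t. (x,a)\<in>M}"
  have neg: "(x - y, a - b) \<in> M" if "(x,a)\<in>M" "(y,b)\<in>M" for x a y b
    using ad1[OF that(1) sc[OF that(2), of "-1"]] by simp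
  have "hb_good d M'"
    unfolding hb_good_def
  proof (intro conjI allI impI)
    fix x a b assume A: "(x,a)\<in>M'" "(x,b)\<in>M'"
    then obtain x1 a1 t1 x2 a2 t2 where e1: "x = x1 + t1 *\<^sub>R w" "a = a1 + t1 * c" "(x1,a1)\<in>M"
      and e2: "x = x2 + t2 *\<^sub>R w" "b = a2 + t2 * c" "(x2,a2)\<in>M"
      unfolding M'_def by blast
    have "t1 = t2"
    proof (rule ccontr)
      assume ne: "t1 \<noteq> t2"
      have "x1 - x2 = (t2 - t1) *\<^sub>R w" using e1(1) e2(1) by (simp add: algebra_simps)
      hence "w = (1 / (t2 - t1)) *\<^sub>R (x1 - x2)" using ne by simp
      hence "(w, (1 / (t2 - t1)) * (a1 - a2)) \<in> M" using sc[OF neg[OF e1(3) e2(3)], of "1 / (t2 - t1)"] by simp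
      thus False using w by blast
    qed
    hence "x1 = x2" using e1(1) e2(1) by simp
    hence "a1 = a2" using fn1 e1(3) e2(3) by blast
    thus "a = b" using e1 e2 \<open>t1 = t2\<close> by simp
  next
    fix x a y b assume A: "(x,a)\<in>M'" "(y,b)\<in>M'"
    then obtain x1 a1 t1 x2 a2 t2 where e1: "x = x1 + t1 *\<^sub>R w" "a = a1 + t1 * c" "(x1,a1)\<in>M"
      and e2: "y = x2 + t2 *\<^sub>R w" "b = a2 + t2 * c" "(x2,a2)\<in>M"
      unfolding M'_def by blast
    have "x + y = (x1 + x2) + (t1 + t2) *\<^sub>R w" "a + b = (a1 + a2) + (t1 + t2) * c"
      using e1 e2 by (simp_all add: algebra_simps)
    thus "(x + y, a + b) \<in> M'" unfolding M'_def using ad1[OF e1(3) e2(3)] by blast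
  next
    fix x a r assume A: "(x,a)\<in>M'"
    then obtain x1 a1 t1 where e1: "x = x1 + t1 *\<^sub>R w" "a = a1 + t1 * c" "(x1,a1)\<in>M"
      unfolding M'_def by blast
    have "r *\<^sub>R x = r *\<^sub>R x1 + (r * t1) *\<^sub>R w" "r * a = r * a1 + (r * t1) * c"
      using e1 by (simp_all add: algebra_simps)
    thus "(r *\<^sub>R x, r * a) \<in> M'" unfolding M'_def using sc[OF e1(3)] by blast
  next
    fix x a assume A: "(x,a)\<in>M'"
    then obtain x1 a1 t where e1: "x = x1 + t *\<^sub>R w" "a = a1 + t * c" "(x1,a1)\<in>M"
      unfolding M'_def by blast
    consider "t = 0" | "t > 0" | "t < 0" by linarith
    then show "a \<le> norm x"
    proof cases
      case 1 thus ?thesis using bd[OF e1(3)] e1 by simp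
    next
      case 2
      have "c \<le> norm ((1/t) *\<^sub>R x1 + w) - (1/t) * a1" using c_le[OF sc[OF e1(3), of "1/t"]] .
      also have "(1/t) *\<^sub>R x1 + w = (1/t) *\<^sub>R x" using 2 e1(1) by (simp add: algebra_simps)
      finally have "c \<le> norm x / t - a1 / t" using 2 by simp
      hence "t * c \<le> norm x - a1" using 2 by (simp add: field_simps)
      thus ?thesis using e1 by simp
    next
      case 3
      have "(1/(-t)) * a1 - norm ((1/(-t)) *\<^sub>R x1 - w) \<le> c" using c_ge[OF sc[OF e1(3), of "1/(-t)"]] .
      also have "(1/(-t)) *\<^sub>R x1 - w = (1/(-t)) *\<^sub>R x" using 3 e1(1) by (simp add: algebra_simps)
      finally have "a1 / (-t) - norm x / (-t) \<le> c" using 3 by simp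
      hence "a1 - norm x \<le> (-t) * c" using 3 by (simp add: field_simps)
      thus ?thesis using e1 by (simp add: algebra_simps)
    qed
  next
    have "(d, norm d) = (d + 0 *\<^sub>R w, norm d + 0 * c)" by simp
    thus "(d, norm d) \<in> M'" unfolding M'_def using dM by blast
  qed
  moreover have "M \<subseteq> M'"
  proof
    fix p assume "p \<in> M"
    then obtain x a where "p = (x,a)" "(x,a)\<in>M" by (cases p) auto
    moreover have "(x, a) = (x + 0 *\<^sub>R w, a + 0 * c)" by simp
    ultimately show "p \<in> M'" unfolding M'_def by blast
  qed
  moreover have "(w, c) = (0 + 1 *\<^sub>R w, 0 + 1 * c)" by simp
  hence "(w, c) \<in> M'" unfolding M'_def using zero by blast
  hence "M' \<noteq> M" using w by blast
  ultimately show ?thesis by blast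
qed

lemma hb_good_init:
  fixes d :: "'a::real_normed_vector"
  assumes d: "d \<noteq> 0"
  shows "hb_good d {(t *\<^sub>R d, t * norm d) | t. True}"
  unfolding hb_good_def
proof (intro conjI allI impI)
  fix x a b assume "(x,a) \<in> {(t *\<^sub>R d, t * norm d) | t. True}" "(x,b) \<in> {(t *\<^sub>R d, t * norm d) | t. True}"
  then obtain t s where "x = t *\<^sub>R d" "a = t * norm d" "x = s *\<^sub>R d" "b = s * norm d" by blast
  hence "t = s" using d by (metis scaleR_cancel_right)
  thus "a = b" using \<open>a = _\<close> \<open>b = _\<close> by simp
next
  fix x a y b assume "(x,a) \<in> {(t *\<^sub>R d, t * norm d) | t. True}" "(y,b) \<in> {(t *\<^sub>R d, t * norm d) | t. True}"
  then obtain t s where "x = t *\<^sub>R d" "a = t * norm d" "y = s *\<^sub>R d" "b = s * norm d" by blast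
  hence "(x + y, a + b) = ((t + s) *\<^sub>R d, (t + s) * norm d)" by (simp add: algebra_simps)
  thus "(x + y, a + b) \<in> {(t *\<^sub>R d, t * norm d) | t. True}" by blast
next
  fix x a r assume "(x,a) \<in> {(t *\<^sub>R d, t * norm d) | t. True}"
  then obtain t where "x = t *\<^sub>R d" "a = t * norm d" by blast
  hence "(r *\<^sub>R x, r * a) = ((r * t) *\<^sub>R d, (r * t) * norm d)" by simp
  thus "(r *\<^sub>R x, r * a) \<in> {(t *\<^sub>R d, t * norm d) | t. True}" by blast
next
  fix x a assume "(x,a) \<in> {(t *\<^sub>R d, t * norm d) | t. True}"
  then obtain t where "x = t *\<^sub>R d" "a = t * norm d" by blast
  thus "a \<le> norm x" by (simp add: mult_right_mono)
next
  have "(d, norm d) = (1 *\<^sub>R d, 1 * norm d)" by simp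
  thus "(d, norm d) \<in> {(t *\<^sub>R d, t * norm d) | t. True}" by blast
qed

lemma hb_good_chain:
  fixes d :: "'a::real_normed_vector"
  assumes C: "C \<in> chains {G. hb_good d G}" and ne: "C \<noteq> {}"
  shows "hb_good d (\<Union>C)"
proof -
  have CA: "\<And>G. G \<in> C \<Longrightarrow> hb_good d G" and ch: "\<And>G H. G \<in> C \<Longrightarrow> H \<in> C \<Longrightarrow> G \<subseteq> H \<or> H \<subseteq> G"
    using C unfolding chains_def chain_subset_def by auto
  have two: "\<exists>G\<in>C. p \<in> G \<and> q \<in> G" if pq: "p \<in> \<Union>C" "q \<in> \<Union>C" for p q
  proof -
    obtain G H where "G \<in> C" "H \<in> C" "p \<in> G" "q \<in> H" using pq by blast
    thus ?thesis using ch[of G H] by blast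
  qed
  show ?thesis unfolding hb_good_def
  proof (intro conjI allI impI)
    fix x a b assume "(x,a) \<in> \<Union>C" "(x,b) \<in> \<Union>C"
    then obtain G where "G \<in> C" "(x,a) \<in> G" "(x,b) \<in> G" using two by blast
    thus "a = b" using CA[of G] unfolding hb_good_def by blast
  next
    fix x a y b assume "(x,a) \<in> \<Union>C" "(y,b) \<in> \<Union>C"
    then obtain G where "G \<in> C" "(x,a) \<in> G" "(y,b) \<in> G" using two by blast
    thus "(x + y, a + b) \<in> \<Union>C" using CA[of G] unfolding hb_good_def by blast
  next
    fix x a r assume "(x,a) \<in> \<Union>C"
    then obtain G where "G \<in> C" "(x,a) \<in> G" by blast
    thus "(r *\<^sub>R x, r * a) \<in> \<Union>C" using CA[of G] unfolding hb_good_def by blast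
  next
    fix x a assume "(x,a) \<in> \<Union>C"
    then obtain G where "G \<in> C" "(x,a) \<in> G" by blast
    thus "a \<le> norm x" using CA[of G] unfolding hb_good_def by blast
  next
    obtain G where "G \<in> C" using ne by blast
    thus "(d, norm d) \<in> \<Union>C" using CA[of G] unfolding hb_good_def by blast
  qed
qed

lemma hahn_banach_norm:
  fixes d :: "'a::real_normed_vector"
  assumes d: "d \<noteq> 0"
  shows "\<exists>\<phi>::'a \<Rightarrow> real. (\<forall>x y. \<phi> (x + y) = \<phi> x + \<phi> y) \<and> (\<forall>r x. \<phi> (r *\<^sub>R x) = r * \<phi> x)
           \<and> (\<forall>x. \<bar>\<phi> x\<bar> \<le> norm x) \<and> \<phi> d = norm d"
proof -
  have "\<forall>C\<in>chains {G. hb_good d G}. \<exists>U\<in>{G. hb_good d G}. \<forall>X\<in>C. X \<subseteq> U"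
  proof
    fix C assume C: "C \<in> chains {G. hb_good d G}"
    show "\<exists>U\<in>{G. hb_good d G}. \<forall>X\<in>C. X \<subseteq> U"
    proof (cases "C = {}")
      case True thus ?thesis using hb_good_init[OF d] by blast
    next
      case False thus ?thesis using hb_good_chain[OF C False] by blast
    qed
  qed
  from Zorn_Lemma2[OF this] obtain M where M: "hb_good d M"
    and max: "\<And>X. hb_good d X \<Longrightarrow> M \<subseteq> X \<Longrightarrow> X = M" by blast
  have tot: "\<exists>a. (w,a) \<in> M" for w
  proof (rule ccontr)
    assume "\<nexists>a. (w, a) \<in> M"
    then obtain M' where "hb_good d M'" "M \<subseteq> M'" "M' \<noteq> M" using hb_extend[OF M] by blast
    thus False using max by blast
  qed
  have fn1: "\<And>x a b. (x,a)\<in>M \<Longrightarrow> (x,b)\<in>M \<Longrightarrow> a = b"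
    and ad1: "\<And>x a y b. (x,a)\<in>M \<Longrightarrow> (y,b)\<in>M \<Longrightarrow> (x+y, a+b)\<in>M"
    and sc: "\<And>x a r. (x,a)\<in>M \<Longrightarrow> (r *\<^sub>R x, r*a)\<in>M"
    and bd: "\<And>x a. (x,a)\<in>M \<Longrightarrow> a \<le> norm x"
    and dM: "(d, norm d) \<in> M"
    using M unfolding hb_good_def by blast+
  define \<phi> where "\<phi> x = (THE a. (x,a) \<in> M)" for x
  have phi: "(x, \<phi> x) \<in> M" for x
    unfolding \<phi>_def using tot[of x] fn1 by (metis theI)
  have phiu: "\<phi> x = a" if "(x,a) \<in> M" for x a using fn1[OF phi that] .
  show ?thesis
  proof (intro exI conjI allI)
    show "\<phi> (x + y) = \<phi> x + \<phi> y" for x y using phiu[OF ad1[OF phi phi]] .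
    show "\<phi> (r *\<^sub>R x) = r * \<phi> x" for r x using phiu[OF sc[OF phi]] .
    show "\<bar>\<phi> x\<bar> \<le> norm x" for x
    proof -
      have "\<phi> x \<le> norm x" using bd[OF phi] .
      moreover have "\<phi> (-x) \<le> norm x" using bd[OF phi, of "-x"] by simp
      moreover have "\<phi> (-x) = - \<phi> x" using phiu[OF sc[OF phi[of x], of "-1"]] by simp
      ultimately show ?thesis by simp
    qed
    show "\<phi> d = norm d" using phiu[OF dM] .
  qed
qed


lemma PL_core:
  fixes f :: "complex \<Rightarrow> complex"
  assumes holf: "f holomorphic_on U" and U: "open U" and SU: "S \<subseteq> U" and S: "closed S"
    and fr: "\<And>z. z \<in> frontier S \<Longrightarrow> norm (f z) \<le> B"
    and far: "\<And>z. z \<in> S \<Longrightarrow> R \<le> norm z \<Longrightarrow> norm (f z) \<le> B"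
    and z: "z \<in> S"
  shows "norm (f z) \<le> B"
proof -
  define R' where "R' = max R (norm z + 1)"
  define T where "T = S \<inter> cball 0 R'"
  have cT: "closed T" using S by (simp add: T_def closed_Int)
  have zT: "z \<in> T" using z by (simp add: T_def R'_def)
  show ?thesis
  proof (rule maximum_modulus_frontier[where S=T and f=f and \<xi>=z])
    show "f holomorphic_on interior T"
      using holf SU interior_subset unfolding T_def by (meson holomorphic_on_subset inf.coboundedI1 order.trans)
    show "continuous_on (closure T) f"
      using holf SU cT unfolding T_def
      by (metis closure_closed holomorphic_on_imp_continuous_on holomorphic_on_subset inf.coboundedI1)
    show "bounded T" unfolding T_def by (meson bounded_Int bounded_cball)
    show "norm (f w) \<le> B" if "w \<in> frontier T" for w
    proof -
      have "w \<in> closure T" using that by (simp add: frontier_def)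
      hence wT: "w \<in> S" "norm w \<le> R'" using cT by (auto simp: T_def)
      from that have "w \<in> frontier S \<or> w \<in> frontier (cball 0 R')"
        unfolding T_def frontier_Int by auto
      then show ?thesis
      proof
        assume "w \<in> frontier (cball 0 R')"
        moreover have "R' > 0" unfolding R'_def by (smt (verit) norm_ge_zero)
        ultimately have "norm w = R'" by auto
        thus ?thesis using far[OF wT(1)] by (simp add: R'_def)
      qed (rule fr)
    qed
  qed (rule zT)
qed

lemma le_of_forall_pos_exp:
  fixes X B Q :: real
  assumes "\<And>e. 0 < e \<Longrightarrow> X \<le> B * exp (e * Q)"
  shows "X \<le> B"
proof -
  have "((\<lambda>e. B * exp (e * Q)) \<longlongrightarrow> B * exp (0 * Q)) (at_right 0)"
    by (intro tendsto_intros)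
  hence t: "((\<lambda>e. B * exp (e * Q)) \<longlongrightarrow> B) (at_right 0)" by simp
  have "eventually (\<lambda>e. X \<le> B * exp (e * Q)) (at_right (0::real))"
    using eventually_at_right_less[of "0::real"] by eventually_elim (use assms in auto)
  then show ?thesis
    using tendsto_lowerbound[OF t] by simp
qed

lemma le_of_forall_pos_lin:
  fixes X K C :: real
  assumes "\<And>e. 0 < e \<Longrightarrow> X \<le> K * (1 + e * C)" "C \<ge> 0" "K \<ge> 0"
  shows "X \<le> K"
proof (rule field_le_epsilon)
  fix d :: real assume d: "0 < d"
  define e where "e = d / (K * C + 1)"
  have e: "e > 0" using d assms by (simp add: e_def add_nonneg_pos)
  have "X \<le> K * (1 + e * C)" using assms(1)[OF e] .
  also have "\<dots> = K + d * (K * C) / (K * C + 1)" by (simp add: e_def algebra_simps)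
  also have "\<dots> \<le> K + d"
  proof -
    have "K * C \<ge> 0" using assms by simp
    hence "(K * C) / (K * C + 1) \<le> 1" by simp
    thus ?thesis using d by (smt (verit) mult_left_le times_divide_eq_right)
  qed
  finally show "X \<le> K + d" .
qed

lemma frontier_upper_half:
  assumes "w \<in> frontier {z::complex. Im z \<ge> 0}"
  shows "Im w = 0"
proof -
  have c: "closed {z::complex. Im z \<ge> 0}" by (rule closed_halfspace_Im_ge)
  have "w \<in> {z. Im z \<ge> 0}" using assms c by (simp add: frontier_def)
  moreover have "\<not> Im w > 0"
  proof
    assume "Im w > 0"
    hence "w \<in> interior {z::complex. Im z \<ge> 0}"
    proof -
      have "{z::complex. Im z > 0} \<subseteq> interior {z::complex. Im z \<ge> 0}"
        by (rule interior_maximal) (auto simp: open_halfspace_Im_gt)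
      thus ?thesis using \<open>Im w > 0\<close> by blast
    qed
    thus False using assms by (simp add: frontier_def)
  qed
  ultimately show ?thesis by simp
qed

lemma half_plane_bound:
  fixes H :: "complex \<Rightarrow> complex"
  assumes holH: "H holomorphic_on UNIV" and K: "K > 0"
    and real: "\<And>x::real. norm (H (of_real x)) \<le> K"
    and bnd: "\<And>z. Im z \<ge> 0 \<Longrightarrow> norm (H z) \<le> B"
    and z: "Im z \<ge> 0"
  shows "norm (H z) \<le> K"
proof (rule le_of_forall_pos_lin[where C="norm z"])
  fix e :: real assume e: "e > 0"
  define D where "D = (\<lambda>w. 1 - \<i> * of_real e * w)"
  have ReD: "Re (D w) = 1 + e * Im w" for w by (simp add: D_def)
  have D1: "norm (D w) \<ge> 1" if "Im w \<ge> 0" for w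
    using complex_Re_le_cmod[of "D w"] ReD[of w] that e by (smt (verit) mult_nonneg_nonneg)
  have D2: "norm (D w) \<ge> e * norm w - 1" for w
  proof -
    have "norm (\<i> * of_real e * w) \<le> norm (D w) + 1"
      using norm_triangle_ineq4[of 1 "D w"] by (simp add: D_def norm_minus_commute)
    thus ?thesis using e by (simp add: norm_mult)
  qed
  define U where "U = {w. Im w > - 1 / e}"
  have Dnz: "D w \<noteq> 0" if "w \<in> U" for w
  proof -
    have "e * Im w > -1" using that e by (simp add: U_def field_simps)
    thus ?thesis using ReD[of w] by (metis add.commute diff_gt_0_iff_gt diff_minus_eq_add less_irrefl zero_complex.simps(1))
  qed
  define W where "W = (\<lambda>w. H w / D w)"
  have B0: "B \<ge> 0" using bnd[of 0] by (smt (verit) norm_ge_zero zero_complex.sel(2))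
  have "norm (W z) \<le> K"
  proof (rule PL_core[where f=W and z=z and U=U and S="{w. Im w \<ge> 0}" and R="(B / K + 1) / e"])
    show "W holomorphic_on U" unfolding W_def D_def
      using Dnz holomorphic_on_subset[OF holH] unfolding D_def
      by (intro holomorphic_intros) auto
    show "open U" unfolding U_def by (rule open_halfspace_Im_gt)
    show "{w. Im w \<ge> 0} \<subseteq> U" using e by (auto simp: U_def) (smt (verit) divide_pos_pos)
    show "closed {w. Im w \<ge> 0}" by (rule closed_halfspace_Im_ge)
    show "norm (W w) \<le> K" if "w \<in> frontier {w. Im w \<ge> 0}" for w
    proof -
      have "Im w = 0" using frontier_upper_half that by blast
      hence "w = of_real (Re w)" by (simp add: complex_eq_iff)
      hence "norm (H w) \<le> K" using real by metis
      moreover have "norm (D w) \<ge> 1" using D1 \<open>Im w = 0\<close> by simp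
      hence "norm (H w) / norm (D w) \<le> norm (H w) / 1"
        by (intro divide_left_mono) auto
      ultimately show ?thesis unfolding W_def norm_divide by simp
    qed
    show "norm (W w) \<le> K" if "w \<in> {w. Im w \<ge> 0}" "(B / K + 1) / e \<le> norm w" for w
    proof -
      have "e * norm w \<ge> B / K + 1" using that e by (simp add: field_simps)
      hence Dg: "norm (D w) \<ge> B / K" using D2[of w] by linarith
      have BK: "B / K \<ge> 0" using B0 K by simp
      have "norm (H w) \<le> B" using bnd that by simp
      show ?thesis
      proof (cases "B = 0")
        case True thus ?thesis using \<open>norm (H w) \<le> B\<close> K by (simp add: W_def norm_divide)
      next
        case False
        hence "B / K > 0" using B0 K by simp
        hence "norm (W w) \<le> B / (B / K)" unfolding W_def norm_divide
          using \<open>norm (H w) \<le> B\<close> Dg B0 by (intro frac_le) auto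
        thus ?thesis using False K by simp
      qed
    qed
    show "z \<in> {w. Im w \<ge> 0}" using z by simp
  qed
  moreover have "norm (D z) > 0" using D1[OF z] by (cases "D z = 0") auto
  ultimately have "norm (H z) \<le> K * norm (D z)"
    unfolding W_def norm_divide by (simp add: pos_divide_le_eq mult.commute)
  also have "norm (D z) \<le> 1 + e * norm z"
    unfolding D_def using norm_triangle_ineq4[of 1 "\<i> * of_real e * z"] e by (simp add: norm_mult)
  hence "K * norm (D z) \<le> K * (1 + e * norm z)" using K by (intro mult_left_mono) auto
  finally show "norm (H z) \<le> K * (1 + e * norm z)" .
qed (use K in simp_all)


lemma Ln_sector:
  fixes w :: complex
  assumes re: "Re w > 0" and im: "\<bar>Im w\<bar> \<le> Re w"
  shows "\<bar>Im (Ln w)\<bar> \<le> pi / 4"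
proof (rule ccontr)
  assume A: "\<not> \<bar>Im (Ln w)\<bar> \<le> pi / 4"
  define t where "t = Im (Ln w)"
  have w0: "w \<noteq> 0" using re by auto
  have t2: "\<bar>t\<bar> < pi / 2" using Re_Ln_pos_lt[OF w0] re by (simp add: t_def)
  have ew: "exp (Ln w) = w" using w0 by simp
  have rew: "Re w = norm w * cos t" and imw: "Im w = norm w * sin t"
  proof -
    have "Re (exp (Ln w)) = exp (Re (Ln w)) * cos (Im (Ln w))" by (rule Re_exp)
    thus "Re w = norm w * cos t" using w0 by (simp add: t_def)
    have "Im (exp (Ln w)) = exp (Re (Ln w)) * sin (Im (Ln w))" by (rule Im_exp)
    thus "Im w = norm w * sin t" using w0 by (simp add: t_def)
  qed
  have nw: "norm w > 0" using w0 by simp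
  have sc: "\<bar>sin t\<bar> \<le> cos t"
    using im nw unfolding rew imw abs_mult by (simp add: mult_le_cancel_left_pos)
  have sabs: "\<bar>sin t\<bar> = sin \<bar>t\<bar>"
  proof (cases "t \<ge> 0")
    case True
    hence "sin t \<ge> 0" using t2 by (intro sin_ge_zero) auto
    thus ?thesis using True by simp
  next
    case False
    hence "sin (-t) \<ge> 0" using t2 by (intro sin_ge_zero) auto
    thus ?thesis using False by simp
  qed
  have cabs: "cos t = cos \<bar>t\<bar>" by (cases "t \<ge> 0") auto
  have gt: "\<bar>t\<bar> > pi / 4" using A by (simp add: t_def)
  have "sin (pi/4) < sin \<bar>t\<bar>" using gt t2 by (intro sin_monotone_2pi) auto
  moreover have "cos \<bar>t\<bar> < cos (pi/4)" using gt t2 by (intro cos_monotone_0_pi) auto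
  moreover have "sin (pi/4) = cos (pi/4)" by (simp only: sin_45 cos_45)
  ultimately show False using sc sabs cabs by linarith
qed

lemma P_lower:
  fixes z :: complex
  assumes "Re z \<ge> 0" "Im z \<ge> 0"
  shows "Re (exp ((3/2) * Ln ((1 - \<i>) * (z + 1)))) \<ge> cos (3 * pi / 8) * norm z powr (3/2)"
proof -
  define w where "w = (1 - \<i>) * (z + 1)"
  have rew: "Re w = Re z + Im z + 1" and imw: "Im w = Im z - Re z - 1"
    by (simp_all add: w_def algebra_simps)
  have rp: "Re w > 0" using assms rew by simp
  have w0: "w \<noteq> 0" using rp by auto
  have th: "\<bar>Im (Ln w)\<bar> \<le> pi / 4" using assms rew imw by (intro Ln_sector) auto
  define t where "t = Im (Ln w)"
  have "Re (exp ((3/2) * Ln w)) = exp (Re ((3/2) * Ln w)) * cos (Im ((3/2) * Ln w))"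
    by (rule Re_exp)
  also have "exp (Re ((3/2) * Ln w)) = norm w powr (3/2)"
    using w0 by (simp add: Re_Ln powr_def)
  also have "Im ((3/2) * Ln w) = (3/2) * t" by (simp add: t_def)
  finally have eq: "Re (exp ((3/2) * Ln w)) = norm w powr (3/2) * cos ((3/2) * t)" .
  have c1: "cos ((3/2) * t) \<ge> cos (3 * pi / 8)"
  proof -
    have "cos ((3/2) * t) = cos \<bar>(3/2) * t\<bar>" by (cases "t \<ge> 0") auto
    also have "\<dots> \<ge> cos (3 * pi / 8)"
      using th by (intro cos_monotone_0_pi_le) (auto simp: t_def)
    finally show ?thesis .
  qed
  have c0: "cos (3 * pi / 8) \<ge> 0" by (intro cos_ge_zero) auto
  have nz: "norm z \<le> norm w"
  proof -
    have "norm z ^ 2 \<le> norm (z + 1) ^ 2"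
      unfolding cmod_power2 using assms by (simp add: power2_eq_square algebra_simps)
    hence "norm z \<le> norm (z + 1)" by (rule power2_le_imp_le) simp
    also have "norm (z + 1) \<le> norm (1 - \<i>) * norm (z + 1)"
    proof -
      have "norm (1 - \<i>) = sqrt 2" by (simp add: cmod_def)
      hence "norm (1 - \<i>) \<ge> 1" by simp
      thus ?thesis by (simp add: mult_le_cancel_right1)
    qed
    finally show ?thesis by (simp add: w_def norm_mult)
  qed
  have "norm z powr (3/2) \<le> norm w powr (3/2)" using nz by (intro powr_mono2) auto
  hence "cos (3 * pi / 8) * norm z powr (3/2) \<le> cos ((3/2) * t) * norm w powr (3/2)"
    using c0 c1 by (intro mult_mono) auto
  thus ?thesis using eq by (simp add: w_def mult.commute)
qed

lemma frontier_quadrant: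
  assumes "w \<in> frontier {z::complex. Re z \<ge> 0 \<and> Im z \<ge> 0}"
  shows "Re w \<ge> 0 \<and> Im w \<ge> 0 \<and> (Re w = 0 \<or> Im w = 0)"
proof -
  have c: "closed {z::complex. Re z \<ge> 0 \<and> Im z \<ge> 0}"
    using closed_Int[OF closed_halfspace_Re_ge[of 0] closed_halfspace_Im_ge[of 0]]
    by (simp add: Collect_conj_eq)
  have "w \<in> {z. Re z \<ge> 0 \<and> Im z \<ge> 0}" using assms c by (simp add: frontier_def)
  moreover have "\<not> (Re w > 0 \<and> Im w > 0)"
  proof
    assume "Re w > 0 \<and> Im w > 0"
    hence "w \<in> interior {z::complex. Re z \<ge> 0 \<and> Im z \<ge> 0}"
    proof -
      have "{z::complex. Re z > 0 \<and> Im z > 0} \<subseteq> interior {z::complex. Re z \<ge> 0 \<and> Im z \<ge> 0}"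
        by (rule interior_maximal)
           (auto simp: Collect_conj_eq intro!: open_Int open_halfspace_Im_gt open_halfspace_Re_gt)
      thus ?thesis using \<open>Re w > 0 \<and> Im w > 0\<close> by blast
    qed
    thus False using assms by (simp add: frontier_def)
  qed
  ultimately show ?thesis by auto
qed

lemma quadrant_bound:
  fixes F :: "complex \<Rightarrow> complex"
  assumes holF: "F holomorphic_on UNIV" and B: "B > 0"
    and ax1: "\<And>x::real. x \<ge> 0 \<Longrightarrow> norm (F (of_real x)) \<le> B"
    and ax2: "\<And>y::real. y \<ge> 0 \<Longrightarrow> norm (F (\<i> * of_real y)) \<le> B"
    and gr: "\<And>z. Re z \<ge> 0 \<Longrightarrow> Im z \<ge> 0 \<Longrightarrow> norm (F z) \<le> C * exp (A * norm z)"
    and z: "Re z \<ge> 0" "Im z \<ge> 0"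
  shows "norm (F z) \<le> B"
proof -
  define P where "P = (\<lambda>z. exp ((3/2) * Ln ((1 - \<i>) * (z + 1))))"
  define c where "c = cos (3 * pi / 8)"
  have c: "c > 0" unfolding c_def by (intro cos_gt_zero) auto
  define Q where "Q = {z::complex. Re z \<ge> 0 \<and> Im z \<ge> 0}"
  have PQ: "Re (P w) \<ge> c * norm w powr (3/2)" if "w \<in> Q" for w
    using P_lower[of w] that by (simp add: P_def c_def Q_def)
  have PQ0: "Re (P w) \<ge> 0" if "w \<in> Q" for w
    using PQ[OF that] c by (smt (verit) mult_nonneg_nonneg powr_ge_zero)
  define U where "U = {z. Re ((1 - \<i>) * (z + 1)) > 0}"
  have oU: "open U" unfolding U_def
    by (intro open_Collect_less continuous_intros)
  have QU: "Q \<subseteq> U" by (auto simp: Q_def U_def)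
  have holP: "P holomorphic_on U" unfolding P_def U_def
    by (intro holomorphic_intros) (auto simp: complex_nonpos_Reals_iff)
  have cQ: "closed Q"
    using closed_Int[OF closed_halfspace_Re_ge[of 0] closed_halfspace_Im_ge[of 0]]
    by (simp add: Collect_conj_eq Q_def)
  have zQ: "z \<in> Q" using z by (simp add: Q_def)
  show ?thesis
  proof (rule le_of_forall_pos_exp[where Q="Re (P z)"])
    fix e :: real assume e: "e > 0"
    define W where "W = (\<lambda>w. F w * exp (- of_real e * P w))"
    have nE: "norm (exp (- of_real e * P w)) = exp (- e * Re (P w))" for w
      by simp
    obtain R where R: "\<And>r. r \<ge> R \<Longrightarrow> \<bar>C\<bar> * exp (A * r - e * c * r powr (3/2)) \<le> B"
    proof -
      have "((\<lambda>r::real. exp (A * r - (e * c) * r powr (3/2))) \<longlongrightarrow> 0) at_top"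
        using e c by real_asymp
      hence "((\<lambda>r::real. \<bar>C\<bar> * exp (A * r - (e * c) * r powr (3/2))) \<longlongrightarrow> \<bar>C\<bar> * 0) at_top"
        by (intro tendsto_mult tendsto_const)
      hence "eventually (\<lambda>r. \<bar>C\<bar> * exp (A * r - (e * c) * r powr (3/2)) < B) at_top"
        using B by (intro order_tendstoD) auto
      then obtain R where "\<And>r. r \<ge> R \<Longrightarrow> \<bar>C\<bar> * exp (A * r - (e * c) * r powr (3/2)) < B"
        unfolding eventually_at_top_linorder by blast
      thus ?thesis using that by (meson less_imp_le)
    qed
    have "norm (W z) \<le> B"
    proof (rule PL_core[where f=W and z=z and U=U and S=Q and R=R])
      show "W holomorphic_on U" unfolding W_def
        using holP holomorphic_on_subset[OF holF] by (intro holomorphic_intros) auto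
      show "open U" by (rule oU)
      show "Q \<subseteq> U" by (rule QU)
      show "closed Q" by (rule cQ)
      show "norm (W w) \<le> B" if "w \<in> frontier Q" for w
      proof -
        have wq: "Re w \<ge> 0 \<and> Im w \<ge> 0 \<and> (Re w = 0 \<or> Im w = 0)"
          using frontier_quadrant that unfolding Q_def by blast
        have "norm (F w) \<le> B"
        proof (cases "Re w = 0")
          case True
          hence "w = \<i> * of_real (Im w)" by (simp add: complex_eq_iff)
          thus ?thesis using ax2[of "Im w"] wq by metis
        next
          case False
          hence "w = of_real (Re w)" using wq by (simp add: complex_eq_iff)
          thus ?thesis using ax1[of "Re w"] wq by metis
        qed
        moreover have "exp (- e * Re (P w)) \<le> 1"
          using PQ0[of w] wq e by (simp add: Q_def)
        ultimately show ?thesis unfolding W_def norm_mult nE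
          by (metis mult_left_le norm_ge_zero order_trans exp_ge_zero)
      qed
      show "norm (W w) \<le> B" if "w \<in> Q" "R \<le> norm w" for w
      proof -
        have "norm (W w) = norm (F w) * exp (- e * Re (P w))" unfolding W_def norm_mult nE ..
        also have "\<dots> \<le> (\<bar>C\<bar> * exp (A * norm w)) * exp (- e * (c * norm w powr (3/2)))"
        proof (intro mult_mono)
          show "norm (F w) \<le> \<bar>C\<bar> * exp (A * norm w)"
            using gr[of w] that by (smt (verit, best) Q_def exp_ge_zero mem_Collect_eq mult_right_mono)
          show "exp (- e * Re (P w)) \<le> exp (- e * (c * norm w powr (3/2)))"
            using PQ[OF that(1)] e by simp
        qed auto
        also have "\<dots> = \<bar>C\<bar> * exp (A * norm w - e * c * norm w powr (3/2))"
          by (simp add: exp_diff exp_minus field_simps)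
        also have "\<dots> \<le> B" using R that by simp
        finally show ?thesis .
      qed
      show "z \<in> Q" by (rule zQ)
    qed
    moreover have "norm (F z) = norm (W z) * exp (e * Re (P z))"
      unfolding W_def norm_mult nE by (simp add: mult_exp_exp)
    ultimately show "norm (F z) \<le> B * exp (e * Re (P z))"
      by (simp add: mult_right_mono)
  qed
qed

lemma upper_bound:
  fixes g :: "complex \<Rightarrow> complex"
  assumes holg: "g holomorphic_on UNIV" and K: "K > 0"
    and real: "\<And>x::real. norm (g (of_real x)) \<le> K"
    and tp: "\<And>d. d > 0 \<Longrightarrow> \<exists>C. \<forall>z. norm (g z) \<le> C * exp (d * norm z)"
    and z: "Im z \<ge> 0"
  shows "norm (g z) \<le> K"
proof (rule le_of_forall_pos_exp[where Q="Im z"])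
  fix e :: real assume e: "e > 0"
  obtain C1 where C1: "\<And>w. norm (g w) \<le> C1 * exp (1 * norm w)" using tp[of 1] by auto
  obtain Ce where Ce: "\<And>w. norm (g w) \<le> Ce * exp (e * norm w)" using tp[OF e] by auto
  define H where "H = (\<lambda>w. g w * exp (\<i> * of_real e * w))"
  have nE: "norm (exp (\<i> * of_real e * w)) = exp (- e * Im w)" for w by simp
  have holH: "H holomorphic_on UNIV" unfolding H_def
    using holg by (intro holomorphic_intros) auto
  define B where "B = max K Ce"
  have B: "B > 0" using K by (simp add: B_def)
  have Hreal: "norm (H (of_real x)) \<le> K" for x :: real
    using real[of x] by (simp add: H_def norm_mult)
  have Hlow: "norm (H w) \<le> C1 * exp (1 * norm w)" if "Im w \<ge> 0" for w
  proof -
    have "norm (H w) = norm (g w) * exp (- e * Im w)" by (simp add: H_def norm_mult)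
    also have "\<dots> \<le> norm (g w) * 1" using that e by (intro mult_left_mono) auto
    finally show ?thesis using C1[of w] by simp
  qed
  have Himag: "norm (H (\<i> * of_real y)) \<le> B" if "y \<ge> 0" for y :: real
  proof -
    have "norm (H (\<i> * of_real y)) = norm (g (\<i> * of_real y)) * exp (- e * y)"
      by (simp add: H_def norm_mult)
    also have "\<dots> \<le> (Ce * exp (e * y)) * exp (- e * y)"
      using Ce[of "\<i> * of_real y"] that by (intro mult_right_mono) (auto simp: norm_mult)
    also have "\<dots> = Ce" by (simp add: mult_exp_exp)
    finally show ?thesis by (simp add: B_def)
  qed
  have HB: "norm (H w) \<le> B" if w: "Im w \<ge> 0" for w
  proof (cases "Re w \<ge> 0")
    case True
    show ?thesis
    proof (rule quadrant_bound[where F=H and z=w and A=1 and C=C1])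
      show "norm (H (of_real x)) \<le> B" for x :: real using Hreal[of x] by (simp add: B_def)
      show "norm (H (\<i> * of_real y)) \<le> B" if "y \<ge> 0" for y :: real using Himag that .
      show "norm (H v) \<le> C1 * exp (1 * norm v)" if "Re v \<ge> 0" "Im v \<ge> 0" for v using Hlow that by simp
    qed (use holH B True w in auto)
  next
    case False
    define v where "v = - \<i> * w"
    have wv: "w = \<i> * v" by (simp add: v_def)
    have "norm (H (\<i> * v)) \<le> B"
    proof (rule quadrant_bound[where F="\<lambda>v. H (\<i> * v)" and z=v and A=1 and C=C1])
      show "(\<lambda>v. H (\<i> * v)) holomorphic_on UNIV"
        using holH by (intro holomorphic_on_compose_gen[unfolded o_def, OF _ holH]) (auto intro!: holomorphic_intros)
      show "norm (H (\<i> * of_real x)) \<le> B" if "x \<ge> 0" for x :: real using Himag that .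
      show "norm (H (\<i> * (\<i> * of_real y))) \<le> B" if "y \<ge> 0" for y :: real
      proof -
        have "\<i> * (\<i> * of_real y) = of_real (- y)" by simp
        thus ?thesis using Hreal[of "-y"] by (simp add: B_def)
      qed
      show "norm (H (\<i> * u)) \<le> C1 * exp (1 * norm u)" if "Re u \<ge> 0" "Im u \<ge> 0" for u
        using Hlow[of "\<i> * u"] that by (simp add: norm_mult)
    qed (use B False w in \<open>auto simp: v_def\<close>)
    thus ?thesis using wv by simp
  qed
  have "norm (H z) \<le> K"
    using half_plane_bound[where H=H and K=K and B=B and z=z] holH K Hreal HB z by blast
  hence "norm (g z) * exp (- e * Im z) \<le> K" by (simp add: H_def norm_mult)
  hence "norm (g z) \<le> K / exp (- e * Im z)" by (simp add: le_divide_eq)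
  thus "norm (g z) \<le> K * exp (e * Im z)" by (simp add: exp_minus divide_inverse)
qed

lemma type0_bounded_line_constant:
  fixes g :: "complex \<Rightarrow> complex"
  assumes holg: "g holomorphic_on UNIV" and K: "K > 0"
    and real: "\<And>x::real. norm (g (of_real x)) \<le> K"
    and tp: "\<And>d. d > 0 \<Longrightarrow> \<exists>C. \<forall>z. norm (g z) \<le> C * exp (d * norm z)"
  shows "g constant_on UNIV"
proof (rule Liouville_theorem[OF holg])
  have "norm (g z) \<le> K" for z
  proof (cases "Im z \<ge> 0")
    case True thus ?thesis using upper_bound[OF holg K real tp] by blast
  next
    case False
    define g2 where "g2 = (\<lambda>z. g (- z))"
    have "norm (g2 (- z)) \<le> K"
    proof (rule upper_bound[where g=g2])
      have u: "(\<lambda>z::complex. -z) holomorphic_on UNIV" by (intro holomorphic_intros)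
      show "g2 holomorphic_on UNIV" unfolding g2_def
        using holomorphic_on_compose_gen[OF u holg] by (simp add: o_def)
      show "norm (g2 (of_real x)) \<le> K" for x :: real
        using real[of "-x"] by (simp add: g2_def)
      show "\<exists>C. \<forall>z. norm (g2 z) \<le> C * exp (d * norm z)" if "d > 0" for d
        using tp[OF that] by (metis g2_def norm_minus_cancel)
    qed (use K False in auto)
    thus ?thesis by (simp add: g2_def)
  qed
  thus "bounded (range g)" by (auto simp: bounded_iff)
qed



lemma cscale_zero_left [simp]: "cscale 0 (x::'a::cstar_algebra_1) = 0"
  using cscale_add_left[of 0 0 x] by simp

lemma cscale_zero_right [simp]: "cscale c (0::'a::cstar_algebra_1) = 0"
  using cscale_add_right[of c 0 0] by simp

lemma cscale_minus_left: "cscale (- c) (x::'a::cstar_algebra_1) = - cscale c x"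
  using cscale_add_left[of c "-c" x] by (simp add: eq_neg_iff_add_eq_0 add.commute)

lemma cscale_minus_right: "cscale c (- x::'a::cstar_algebra_1) = - cscale c x"
  using cscale_add_right[of c x "-x"] by (simp add: eq_neg_iff_add_eq_0 add.commute)

lemma cscale_diff_right: "cscale c (x - y::'a::cstar_algebra_1) = cscale c x - cscale c y"
  using cscale_add_right[of c x "-y"] by (simp add: cscale_minus_right)

lemma cscale_scaleR: "cscale c (r *\<^sub>R x::'a::cstar_algebra_1) = r *\<^sub>R cscale c x"
proof -
  have "cscale c (r *\<^sub>R x) = cscale c (cscale (of_real r) x)" by (simp add: cscale_of_real)
  also have "\<dots> = cscale (of_real r) (cscale c x)" by (simp add: cscale_cscale mult.commute)
  finally show ?thesis by (simp add: cscale_of_real)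
qed

lemma cscale_mult_both: "cscale c (x::'a::cstar_algebra_1) * cscale d y = cscale (c * d) (x * y)"
  by (simp add: cscale_mult_left cscale_mult_right cscale_cscale mult.commute)

lemma cscale_power: "(cscale c (x::'a::cstar_algebra_1)) ^ n = cscale (c ^ n) (x ^ n)"
  by (induction n) (simp_all add: cscale_one cscale_mult_both)

lemma cscale_sum: "cscale c (sum f A :: 'a::cstar_algebra_1) = (\<Sum>i\<in>A. cscale c (f i))"
  by (induction A rule: infinite_finite_induct) (simp_all add: cscale_add_right)

lemma bounded_linear_cscale: "bounded_linear (cscale c :: 'a::cstar_algebra_1 \<Rightarrow> 'a)"
  by (rule bounded_linear_intro[where K="cmod c"])
     (simp_all add: cscale_add_right cscale_scaleR norm_cscale mult.commute)

lemma adj_zero [simp]: "adj (0::'a::cstar_algebra_1) = 0"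
  using adj_add[of "0::'a" 0] by simp

lemma adj_minus: "adj (- x::'a::cstar_algebra_1) = - adj x"
  using adj_add[of x "-x"] by (simp add: eq_neg_iff_add_eq_0 add.commute)

lemma adj_diff: "adj (x - y::'a::cstar_algebra_1) = adj x - adj y"
  using adj_add[of x "-y"] by (simp add: adj_minus)

lemma adj_scaleR: "adj (r *\<^sub>R x::'a::cstar_algebra_1) = r *\<^sub>R adj x"
  using adj_cscale[of "of_real r" x] by (simp add: cscale_of_real)

lemma adj_one [simp]: "adj (1::'a::cstar_algebra_1) = 1"
proof -
  have "adj ((adj 1::'a) * 1) = adj 1 * adj (adj 1)" by (rule adj_mult)
  hence "adj (adj (1::'a)) = adj 1 * adj (adj 1)" by simp
  thus ?thesis by (simp add: adj_adj)
qed

lemma adj_power: "adj ((x::'a::cstar_algebra_1) ^ n) = adj x ^ n"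
proof (induction n)
  case (Suc n)
  have "adj (x ^ Suc n) = adj (x ^ n * x)" by (simp add: power_commutes)
  also have "\<dots> = adj x * adj x ^ n" by (simp add: adj_mult Suc)
  finally show ?case by simp
qed simp

lemma norm_adj_le: "norm (x::'a::cstar_algebra_1) \<le> norm (adj x)"
proof (cases "x = 0")
  case False
  have "norm x ^ 2 = norm (adj x * x)" by (simp add: cstar_identity)
  also have "\<dots> \<le> norm (adj x) * norm x" by (rule norm_mult_ineq)
  finally have "norm x * norm x \<le> norm (adj x) * norm x" by (simp add: power2_eq_square)
  thus ?thesis using False by simp
qed simp

lemma norm_adj [simp]: "norm (adj (x::'a::cstar_algebra_1)) = norm x"
  using norm_adj_le[of x] norm_adj_le[of "adj x"] by (simp add: adj_adj)

lemma bounded_linear_adj: "bounded_linear (adj :: 'a::cstar_algebra_1 \<Rightarrow> 'a)"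
  by (rule bounded_linear_intro[where K=1]) (simp_all add: adj_add adj_scaleR)

lemma adj_exp: "adj (exp (x::'a::cstar_algebra_1)) = exp (adj x)"
proof -
  have "(\<lambda>n. x ^ n /\<^sub>R fact n) sums exp x" by (rule exp_converges)
  hence "(\<lambda>n. adj (x ^ n /\<^sub>R fact n)) sums adj (exp x)"
    by (rule bounded_linear.sums[OF bounded_linear_adj])
  hence "(\<lambda>n. adj x ^ n /\<^sub>R fact n) sums adj (exp x)"
    by (simp add: adj_scaleR adj_power)
  thus ?thesis using exp_converges[of "adj x"] sums_unique2 by blast
qed

lemma norm_adj_mult_self: "norm (adj x * (x::'a::cstar_algebra_1)) = norm x ^ 2"
  by (rule cstar_identity)

lemma Cpow_one_self: "n > 0 \<Longrightarrow> Cpow_one x (x::'a::cstar_algebra_1) n = 0"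
proof -
  assume n: "n > 0"
  have "Cpow_one x x n = (\<Sum>k\<le>n. ((-1) ^ k * of_nat (n choose k)) *\<^sub>R x ^ n)"
    unfolding Cpow_one_def
    by (intro sum.cong refl) (simp add: power_add[symmetric])
  also have "\<dots> = (\<Sum>k\<le>n. (-1) ^ k * of_nat (n choose k)) *\<^sub>R x ^ n"
    by (simp add: scaleR_sum_left)
  also have "(\<Sum>k\<le>n. (-1) ^ k * of_nat (n choose k)) = (0::real)"
    using choose_alternating_sum[OF n] .
  finally show ?thesis by simp
qed

lemma rho_self: "rho x (x::'a::cstar_algebra_1) = 0"
proof -
  have "(\<lambda>n. ereal (root n (norm (Cpow_one x x n)))) = (\<lambda>n. 0)"
  proof
    fix n show "ereal (root n (norm (Cpow_one x x n))) = 0"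
      by (cases "n = 0") (simp_all add: Cpow_one_self)
  qed
  thus ?thesis unfolding rho_def by (simp add: Limsup_const)
qed

lemma cscale_commute: "cscale c (x::'a::cstar_algebra_1) * cscale d x = cscale d x * cscale c x"
  by (simp add: cscale_mult_both mult.commute)

lemma exp_cscale_add: "exp (cscale c (x::'a::cstar_algebra_1)) * exp (cscale d x) = exp (cscale (c + d) x)"
  by (simp add: exp_add_commuting[OF cscale_commute, symmetric] cscale_add_left)

lemma selfadj_unitary:
  assumes "adj a = (a::'a::cstar_algebra_1)"
  shows "norm (exp (cscale (\<i> * of_real t) a)) = 1"
proof -
  define u where "u = exp (cscale (\<i> * of_real t) a)"
  have "adj u = exp (cscale (- (\<i> * of_real t)) a)"
    unfolding u_def by (simp add: adj_exp adj_cscale assms)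
  hence "adj u * u = exp (cscale 0 a)" unfolding u_def by (simp add: exp_cscale_add)
  hence "norm (adj u * u) = 1" by simp
  hence "norm u ^ 2 = 1" by (simp add: cstar_identity)
  hence "norm u = 1 \<or> norm u = -1" by (simp add: power2_eq_1_iff)
  thus ?thesis unfolding u_def by (smt (verit) norm_ge_zero)
qed

lemma forward:
  assumes "adj a = (a::'a::cstar_algebra_1)"
  shows "rho (adj a) a = 0 \<and> bdd_above (range (\<lambda>n::int. norm (exp (cscale (\<i> * of_int n) a))))"
proof
  show "rho (adj a) a = 0" using assms rho_self by metis
  have "norm (exp (cscale (\<i> * of_int n) a)) = 1" for n :: int
    using selfadj_unitary[OF assms, of "of_int n"] by simp
  thus "bdd_above (range (\<lambda>n::int. norm (exp (cscale (\<i> * of_int n) a))))" by (auto intro: bdd_aboveI)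
qed

lemma Cpow_growth:
  fixes a b :: "'a::cstar_algebra_1"
  assumes r: "rho b a = 0" and d: "d > 0"
  shows "\<exists>D\<ge>1. \<forall>n. norm (Cpow_one b a n) \<le> D * d ^ n"
proof -
  have "ereal d > limsup (\<lambda>n. ereal (root n (norm (Cpow_one b a n))))"
    using r d unfolding rho_def by simp
  hence "eventually (\<lambda>n. ereal (root n (norm (Cpow_one b a n))) < ereal d) sequentially"
    by (rule Limsup_lessD)
  then obtain N where N: "\<And>n. n \<ge> N \<Longrightarrow> root n (norm (Cpow_one b a n)) < d"
    unfolding eventually_sequentially by auto
  define N' where "N' = Suc N"
  define D where "D = 1 + (\<Sum>n<N'. norm (Cpow_one b a n) / d ^ n)"
  have nn: "0 \<le> norm (Cpow_one b a n) / d ^ n" for n using d by simp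
  have D1: "D \<ge> 1" unfolding D_def by (simp add: nn sum_nonneg)
  have "norm (Cpow_one b a n) \<le> D * d ^ n" for n
  proof (cases "n < N'")
    case True
    have "norm (Cpow_one b a n) / d ^ n \<le> (\<Sum>n<N'. norm (Cpow_one b a n) / d ^ n)"
      using True by (intro member_le_sum) (auto simp: nn)
    hence "norm (Cpow_one b a n) / d ^ n \<le> D" unfolding D_def by simp
    thus ?thesis using d by (simp add: divide_le_eq)
  next
    case False
    hence n: "n \<ge> N" "n > 0" by (auto simp: N'_def)
    have "norm (Cpow_one b a n) = root n (norm (Cpow_one b a n)) ^ n"
      using n by (simp add: real_root_pow_pos2)
    also have "\<dots> \<le> d ^ n" using N[OF n(1)] n
      by (intro power_mono) (auto simp: real_root_ge_zero)
    also have "\<dots> \<le> D * d ^ n" using D1 d by simp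
    finally show ?thesis .
  qed
  thus ?thesis using D1 by blast
qed

lemma exp_real_bound:
  fixes a :: "'a::cstar_algebra_1"
  assumes M: "\<And>n::int. norm (exp (cscale (\<i> * of_int n) a)) \<le> M"
  shows "norm (exp (cscale (\<i> * of_real s) a)) \<le> M * exp (norm a)"
proof -
  define n where "n = floor s"
  define f where "f = s - of_int n"
  have f: "0 \<le> f" "f \<le> 1" unfolding f_def n_def by linarith+
  have "\<i> * of_real s = \<i> * of_int n + \<i> * of_real f" by (simp add: f_def algebra_simps)
  hence "exp (cscale (\<i> * of_real s) a) = exp (cscale (\<i> * of_int n) a) * exp (cscale (\<i> * of_real f) a)"
    by (simp add: exp_cscale_add)
  hence "norm (exp (cscale (\<i> * of_real s) a)) \<le> norm (exp (cscale (\<i> * of_int n) a)) * norm (exp (cscale (\<i> * of_real f) a))"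
    by (simp add: norm_mult_ineq)
  also have "\<dots> \<le> M * exp (norm a)"
  proof (rule mult_mono)
    show "norm (exp (cscale (\<i> * of_real f) a)) \<le> exp (norm a)"
    proof -
      have "norm (exp (cscale (\<i> * of_real f) a)) \<le> exp (norm (cscale (\<i> * of_real f) a))" by (rule norm_exp)
      also have "norm (cscale (\<i> * of_real f) a) = f * norm a" using f by (simp add: norm_cscale norm_mult)
      also have "exp (f * norm a) \<le> exp (norm a)" using f by (simp add: mult_left_le_one_le)
      finally show ?thesis .
    qed
    show "0 \<le> M" using M[of 0] norm_ge_zero order_trans by blast
  qed (use M in auto)
  finally show ?thesis .
qed

lemma coeff_identity:
  fixes z :: complex
  assumes "i \<le> k"
  shows "complex_of_real (1 / (fact i * fact (k - i))) * (z ^ i * (- z) ^ (k - i))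
       = z ^ k / fact k * complex_of_real ((-1) ^ (k - i) * of_nat (k choose (k - i)))"
proof -
  obtain m where m: "k = i + m" using assms le_Suc_ex by blast
  have km: "k - i = m" using m by simp
  have b: "(of_nat (k choose m) :: complex) = fact k / (fact i * fact m)"
    using binomial_fact[of m k] m by (simp add: mult.commute)
  have fk: "(fact k :: complex) \<noteq> 0" by simp
  have fim: "(fact i * fact m :: complex) \<noteq> 0" by simp
  have L: "complex_of_real (1 / (fact i * fact m)) * (z ^ i * (- z) ^ m) = (-1) ^ m * z ^ k / (fact i * fact m)"
  proof -
    have e1: "complex_of_real (1 / (fact i * fact m)) = 1 / (fact i * fact m)" by simp
    have e2: "(- z) ^ m = (-1) ^ m * z ^ m" by (rule power_minus)
    have e3: "z ^ k = z ^ i * z ^ m" unfolding m by (rule power_add)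
    have g: "(1 / F) * (A * (s * B)) = s * (A * B) / F" for F A s B :: complex by simp
    show ?thesis unfolding e1 e2 e3 by (rule g)
  qed
  have R: "z ^ k / fact k * complex_of_real ((-1) ^ m * of_nat (k choose m)) = (-1) ^ m * z ^ k / (fact i * fact m)"
  proof -
    have "complex_of_real ((-1) ^ m * of_nat (k choose m)) = (-1) ^ m * (fact k / (fact i * fact m))"
      by (simp add: b[symmetric])
    thus ?thesis using fk by simp
  qed
  show ?thesis unfolding km using L R by simp
qed

lemma exp_prod_series:
  fixes a b :: "'a::cstar_algebra_1"
  shows "(\<lambda>k. cscale (z ^ k / fact k) (Cpow_one b a k)) sums (exp (cscale z b) * exp (cscale (- z) a))"
proof -
  define p where "p i = (cscale z b) ^ i /\<^sub>R fact i" for i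
  define q where "q i = (cscale (- z) a) ^ i /\<^sub>R fact i" for i
  have "(\<lambda>k. \<Sum>i\<le>k. p i * q (k - i)) sums ((\<Sum>k. p k) * (\<Sum>k. q k))"
    unfolding p_def q_def by (intro Cauchy_product_sums summable_norm_exp)
  also have "(\<Sum>k. p k) = exp (cscale z b)" unfolding p_def by (rule sums_unique[OF exp_converges, symmetric])
  also have "(\<Sum>k. q k) = exp (cscale (- z) a)" unfolding q_def by (rule sums_unique[OF exp_converges, symmetric])
  also have "(\<lambda>k. \<Sum>i\<le>k. p i * q (k - i)) = (\<lambda>k. cscale (z ^ k / fact k) (Cpow_one b a k))"
  proof
    fix k
    have "(\<Sum>i\<le>k. p i * q (k - i))
        = (\<Sum>i\<le>k. cscale (complex_of_real (1 / (fact i * fact (k - i))) * (z ^ i * (- z) ^ (k - i))) (b ^ i * a ^ (k - i)))"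
    proof (intro sum.cong refl)
      fix i
      have "p i * q (k - i) = (1 / (fact i * fact (k - i))) *\<^sub>R (cscale (z ^ i) (b ^ i) * cscale ((- z) ^ (k - i)) (a ^ (k - i)))"
        unfolding p_def q_def cscale_power by (simp add: scaleR_scaleR divide_inverse mult.commute)
      also have "\<dots> = cscale (complex_of_real (1 / (fact i * fact (k - i))) * (z ^ i * (- z) ^ (k - i))) (b ^ i * a ^ (k - i))"
        by (simp add: cscale_mult_both cscale_of_real[symmetric] cscale_cscale)
      finally show "p i * q (k - i) = \<dots>" .
    qed
    also have "\<dots> = (\<Sum>i\<le>k. cscale (z ^ k / fact k * complex_of_real ((-1) ^ (k - i) * of_nat (k choose (k - i)))) (b ^ i * a ^ (k - i)))"
    proof (rule sum.cong[OF refl])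
      fix i assume "i \<in> {..k}"
      hence ik: "i \<le> k" by simp
      show "cscale (complex_of_real (1 / (fact i * fact (k - i))) * (z ^ i * (- z) ^ (k - i))) (b ^ i * a ^ (k - i))
          = cscale (z ^ k / fact k * complex_of_real ((-1) ^ (k - i) * of_nat (k choose (k - i)))) (b ^ i * a ^ (k - i))"
        by (simp only: coeff_identity[OF ik])
    qed
    also have "\<dots> = (\<Sum>j\<le>k. cscale (z ^ k / fact k * complex_of_real ((-1) ^ j * of_nat (k choose j))) (b ^ (k - j) * a ^ j))"
    proof -
      have "(\<Sum>j\<le>k. cscale (z ^ k / fact k * complex_of_real ((-1) ^ j * of_nat (k choose j))) (b ^ (k - j) * a ^ j))
          = (\<Sum>i\<le>k. cscale (z ^ k / fact k * complex_of_real ((-1) ^ (k - i) * of_nat (k choose (k - i)))) (b ^ (k - (k - i)) * a ^ (k - i)))"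
        unfolding atMost_atLeast0 by (subst sum.atLeastAtMost_rev) simp
      also have "\<dots> = (\<Sum>i\<le>k. cscale (z ^ k / fact k * complex_of_real ((-1) ^ (k - i) * of_nat (k choose (k - i)))) (b ^ i * a ^ (k - i)))"
        by (intro sum.cong refl) simp
      finally show ?thesis by simp
    qed
    also have "\<dots> = cscale (z ^ k / fact k) (Cpow_one b a k)"
      unfolding Cpow_one_def cscale_sum
      by (intro sum.cong refl) (simp add: cscale_of_real[symmetric] cscale_cscale)
    finally show "(\<Sum>i\<le>k. p i * q (k - i)) = cscale (z ^ k / fact k) (Cpow_one b a k)" .
  qed
  finally show ?thesis .
qed


lemma Cpow_one_1: "Cpow_one x (y::'a::cstar_algebra_1) 1 = x - y"
  by (simp add: Cpow_one_def atMost_Suc)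

lemma backward:
  fixes a :: "'a::cstar_algebra_1"
  assumes r: "rho (adj a) a = 0"
    and bd: "bdd_above (range (\<lambda>n::int. norm (exp (cscale (\<i> * of_int n) a))))"
  shows "adj a = a"
proof (rule ccontr)
  assume ne: "adj a \<noteq> a"
  define d where "d = adj a - a"
  have d0: "d \<noteq> 0" using ne by (simp add: d_def)
  obtain \<phi> :: "'a \<Rightarrow> real" where phadd: "\<And>x y. \<phi> (x + y) = \<phi> x + \<phi> y"
    and phR: "\<And>r x. \<phi> (r *\<^sub>R x) = r * \<phi> x" and phb: "\<And>x. \<bar>\<phi> x\<bar> \<le> norm x"
    and phd: "\<phi> d = norm d"
    using hahn_banach_norm[OF d0] by blast
  define \<psi> where "\<psi> x = complex_of_real (\<phi> x) - \<i> * complex_of_real (\<phi> (cscale \<i> x))" for x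
  have psadd: "\<psi> (x + y) = \<psi> x + \<psi> y" for x y
    by (simp add: \<psi>_def phadd cscale_add_right algebra_simps)
  have psR: "\<psi> (r *\<^sub>R x) = complex_of_real r * \<psi> x" for r x
    by (simp add: \<psi>_def phR cscale_scaleR algebra_simps)
  have psi: "\<psi> (cscale \<i> x) = \<i> * \<psi> x" for x
  proof -
    have "cscale \<i> (cscale \<i> x) = (-1) *\<^sub>R x"
      using cscale_of_real[of "-1" x] by (simp add: cscale_cscale)
    hence "\<phi> (cscale \<i> (cscale \<i> x)) = - \<phi> x" using phR[of "-1" x] by simp
    thus ?thesis by (simp add: \<psi>_def algebra_simps)
  qed
  have psC: "\<psi> (cscale w x) = w * \<psi> x" for w x
  proof -
    have we: "w = complex_of_real (Re w) + complex_of_real (Im w) * \<i>" by (simp add: complex_eq_iff)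
    have "cscale w x = cscale (complex_of_real (Re w) + complex_of_real (Im w) * \<i>) x"
      by (rule arg_cong[where f="\<lambda>c. cscale c x", OF we])
    also have "\<dots> = Re w *\<^sub>R x + Im w *\<^sub>R cscale \<i> x"
      by (simp add: cscale_add_left cscale_cscale[symmetric] cscale_of_real)
    finally have "\<psi> (cscale w x) = complex_of_real (Re w) * \<psi> x + complex_of_real (Im w) * (\<i> * \<psi> x)"
      by (simp add: psadd psR psi)
    also have "\<dots> = (complex_of_real (Re w) + \<i> * complex_of_real (Im w)) * \<psi> x"
      by (simp add: algebra_simps)
    also have "complex_of_real (Re w) + \<i> * complex_of_real (Im w) = w" by (simp add: complex_eq_iff)
    finally show ?thesis .
  qed
  have psb: "norm (\<psi> x) \<le> 2 * norm x" for x
  proof -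
    have "norm (\<psi> x) \<le> norm (complex_of_real (\<phi> x)) + norm (\<i> * complex_of_real (\<phi> (cscale \<i> x)))"
      unfolding \<psi>_def by (rule norm_triangle_ineq4)
    also have "\<dots> = \<bar>\<phi> x\<bar> + \<bar>\<phi> (cscale \<i> x)\<bar>" by (simp add: norm_mult)
    also have "\<dots> \<le> norm x + norm (cscale \<i> x)" using phb by (intro add_mono) auto
    also have "norm (cscale \<i> x) = norm x" by (simp add: norm_cscale)
    finally show ?thesis by simp
  qed
  have blpsi: "bounded_linear \<psi>"
  proof (rule bounded_linear_intro[where K=2])
    show "\<psi> (x + y) = \<psi> x + \<psi> y" for x y by (rule psadd)
    show "\<psi> (r *\<^sub>R x) = r *\<^sub>R \<psi> x" for r x unfolding psR[of r x] by (simp add: scaleR_conv_of_real)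
    show "norm (\<psi> x) \<le> norm x * 2" for x using psb[of x] by (simp add: mult.commute)
  qed
  have psd: "\<psi> d \<noteq> 0"
  proof
    assume "\<psi> d = 0"
    hence "Re (\<psi> d) = 0" by simp
    hence "\<phi> d = 0" by (simp add: \<psi>_def)
    thus False using phd d0 by simp
  qed
  define c where "c n = Cpow_one (adj a) a n" for n
  define \<gamma> where "\<gamma> n = \<psi> (c n) / fact n" for n
  define F where "F z = exp (cscale z (adj a)) * exp (cscale (- z) a)" for z
  have Fs: "(\<lambda>n. \<gamma> n * z ^ n) sums \<psi> (F z)" for z
  proof -
    have "(\<lambda>k. \<psi> (cscale (z ^ k / fact k) (c k))) sums \<psi> (F z)"
      unfolding F_def c_def by (rule bounded_linear.sums[OF blpsi exp_prod_series])
    thus ?thesis by (simp add: psC \<gamma>_def mult.commute)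
  qed
  define g where "g z = (\<Sum>n. \<gamma> n * z ^ n)" for z
  have gF: "g z = \<psi> (F z)" for z unfolding g_def using Fs sums_unique by metis
  have summ: "summable (\<lambda>n. \<gamma> n * z ^ n)" for z using Fs sums_summable by blast
  have gder: "(g has_field_derivative (\<Sum>n. diffs \<gamma> n * x ^ n)) (at x)" for x
    unfolding g_def by (rule termdiffs_strong_converges_everywhere[OF summ])
  have holg: "g holomorphic_on UNIV"
    unfolding holomorphic_on_def field_differentiable_def
    using gder has_field_derivative_at_within by blast
  have g0: "(g has_field_derivative \<psi> d) (at 0)"
  proof -
    have "(\<Sum>n. diffs \<gamma> n * 0 ^ n) = \<psi> d"
      using Cpow_one_1[of "adj a" a] by (simp add: diffs_def \<gamma>_def c_def d_def)
    thus ?thesis using gder[of 0] by simp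
  qed
  have typ0: "\<exists>C. \<forall>z. norm (g z) \<le> C * exp (e * norm z)" if e: "e > 0" for e
  proof -
    obtain D where D: "D \<ge> 1" "\<And>n. norm (c n) \<le> D * e ^ n"
      using Cpow_growth[OF r e] unfolding c_def by blast
    have "norm (g z) \<le> 2 * D * exp (e * norm z)" for z
    proof -
      have tb: "norm (\<gamma> n * z ^ n) \<le> (2 * D) * ((e * norm z) ^ n / fact n)" for n
      proof -
        have "norm (\<gamma> n * z ^ n) = norm (\<psi> (c n)) / fact n * norm z ^ n"
          by (simp add: \<gamma>_def norm_mult norm_divide norm_power)
        also have "\<dots> \<le> (2 * (D * e ^ n)) / fact n * norm z ^ n"
          using psb[of "c n"] D(2)[of n]
          by (intro mult_right_mono divide_right_mono) auto
        also have "\<dots> = (2 * D) * ((e * norm z) ^ n / fact n)"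
          by (simp add: power_mult_distrib)
        finally show ?thesis .
      qed
      have es: "(\<lambda>n. (2 * D) * ((e * norm z) ^ n / fact n)) sums ((2 * D) * exp (e * norm z))"
        using sums_mult[OF exp_converges[of "e * norm z"], of "2 * D"] by (simp add: divide_inverse mult.commute)
      have "norm (g z) \<le> (\<Sum>n. (2 * D) * ((e * norm z) ^ n / fact n))"
        unfolding g_def by (rule norm_suminf_le[OF tb sums_summable[OF es]])
      also have "\<dots> = 2 * D * exp (e * norm z)" using es sums_unique by metis
      finally show ?thesis .
    qed
    thus ?thesis by blast
  qed
  obtain M where M: "\<And>n::int. norm (exp (cscale (\<i> * of_int n) a)) \<le> M"
    using bd unfolding bdd_above_def by blast
  define K where "K = 2 * (M * exp (norm a)) ^ 2 + 1"
  have K: "K > 0" unfolding K_def by (simp add: add_nonneg_pos)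
  define g' where "g' z = g (\<i> * z)" for z
  have imag: "norm (g' (of_real t)) \<le> K" for t
  proof -
    define u where "u = exp (cscale (\<i> * of_real (- t)) a)"
    have adju: "adj u = exp (cscale (\<i> * of_real t) (adj a))"
      unfolding u_def by (simp add: adj_exp adj_cscale)
    have Fu: "F (\<i> * of_real t) = adj u * u" unfolding F_def adju by (simp add: u_def)
    have nu: "norm u \<le> M * exp (norm a)" unfolding u_def by (rule exp_real_bound[OF M])
    have "norm (g' (of_real t)) = norm (\<psi> (adj u * u))" by (simp add: g'_def gF Fu)
    also have "\<dots> \<le> 2 * norm (adj u * u)" by (rule psb)
    also have "norm (adj u * u) = norm u ^ 2" by (rule cstar_identity)
    also have "2 * norm u ^ 2 \<le> 2 * (M * exp (norm a)) ^ 2"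
      using nu by (intro mult_left_mono power_mono) auto
    finally show ?thesis unfolding K_def by simp
  qed
  have holg': "g' holomorphic_on UNIV"
  proof -
    have u: "(\<lambda>z::complex. \<i> * z) holomorphic_on UNIV" by (intro holomorphic_intros)
    show ?thesis unfolding g'_def using holomorphic_on_compose_gen[OF u holg] by (simp add: o_def)
  qed
  have typ': "\<exists>C. \<forall>z. norm (g' z) \<le> C * exp (e * norm z)" if "e > 0" for e
    using typ0[OF that] unfolding g'_def by (metis norm_ii norm_mult mult_1)
  have "g' constant_on UNIV" by (rule type0_bounded_line_constant[OF holg' K imag typ'])
  then obtain y where y: "\<And>z. g' z = y" unfolding constant_on_def by blast
  have "g z = y" for z using y[of "- \<i> * z"] by (simp add: g'_def)
  hence "g = (\<lambda>_. y)" by auto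
  hence "((\<lambda>_. y) has_field_derivative \<psi> d) (at 0)" using g0 by simp
  hence "\<psi> d = 0" using DERIV_const DERIV_unique by blast
  thus False using psd by simp
qed


theorem mainTheorem13:
  fixes a :: "'a::cstar_algebra_1"
  shows "adj a = a \<longleftrightarrow>
    (rho (adj a) a = 0 \<and>
     bdd_above (range (\<lambda>n::int. norm (exp (cscale (\<i> * of_int n) a)))))"
proof
  assume "adj a = a"
  thus "rho (adj a) a = 0 \<and> bdd_above (range (\<lambda>n::int. norm (exp (cscale (\<i> * of_int n) a))))"
    by (rule forward)
next
  assume "rho (adj a) a = 0 \<and> bdd_above (range (\<lambda>n::int. norm (exp (cscale (\<i> * of_int n) a))))"
  thus "adj a = a" using backward by blast
qed

end
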